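(* In the instance constructed below, if there are $k$ distinct elements (distinct indices) $a_1,\dots,a_k$ of the multiset $\mathcal A$ and an index $m\in\{1,\dots,k-1\}$ with $\sum_{j=1}^m a_j=\sum_{j=m+1}^k a_j$, then the $2k$ rectangles $R_{a_1},R'_{a_1},\dots,R_{a_k},R'_{a_k}$ can all be packed feasibly into $K$ without rotating any of them. Moreover, every feasible packing of this instance (with or without rotations) contains at most $2k$ rectangles, so in this case $|\mathrm{OPT}|=2k$ both for 2DK and for 2DKR.
   Context: Let $k\ge 9$ be an odd integer and $\mathcal A$ a multiset of $n$ positive integers; let $M=\max_{a\in\mathcal A}a$ and $N=2Mk^4$, $K=[0,N]\times[0,N]$. For each element $a$ of $\mathcal A$ (counted with multiplicity) create two items (rectangles) $R_a$ with width $w(R_a)=N/k+a$ and height $h(R_a)=N/2-a$, and $R'_a$ with width $w(R'_a)=N/k-a$ and height $h(R'_a)=N/2+a$, each of profit $1$. A feasible packing places a subset of the items as pairwise disjoint open axis-parallel rectangles inside $K$; in 2DK the items keep their given orientation, in 2DKR each may be rotated by $90^\circ$. $\mathrm{OPT}$ denotes a maximum-cardinality feasible packing. *)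

theory Defs
  imports Complex_Main
begin

text \<open>The multiset A of n positive integers is represented by a function
  a :: nat => nat on the index set {..<n} (index i = one copy of an element).
  Items are pairs (i, b): (i, False) is R_{a_i}, (i, True) is R'_{a_i}.\<close>

type_synonym item = "nat \<times> bool"

definition maxA :: "nat \<Rightarrow> (nat \<Rightarrow> nat) \<Rightarrow> nat" where
  "maxA n a = Max (a ` {..<n})"

definition bigN :: "nat \<Rightarrow> nat \<Rightarrow> (nat \<Rightarrow> nat) \<Rightarrow> real" where
  "bigN k n a = 2 * real (maxA n a) * real k ^ 4"

definition items :: "nat \<Rightarrow> item set" where
  "items n = {(i, b). i < n}"

definition item_width :: "nat \<Rightarrow> nat \<Rightarrow> (nat \<Rightarrow> nat) \<Rightarrow> item \<Rightarrow> real" where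
  "item_width k n a it = (case it of (i, b) \<Rightarrow>
     if b then bigN k n a / real k - real (a i) else bigN k n a / real k + real (a i))"

definition item_height :: "nat \<Rightarrow> nat \<Rightarrow> (nat \<Rightarrow> nat) \<Rightarrow> item \<Rightarrow> real" where
  "item_height k n a it = (case it of (i, b) \<Rightarrow>
     if b then bigN k n a / 2 + real (a i) else bigN k n a / 2 - real (a i))"

definition open_rect :: "real \<times> real \<Rightarrow> real \<Rightarrow> real \<Rightarrow> (real \<times> real) set" where
  "open_rect p w h = {(u, v). fst p < u \<and> u < fst p + w \<and> snd p < v \<and> v < snd p + h}"

definition placed :: "nat \<Rightarrow> nat \<Rightarrow> (nat \<Rightarrow> nat) \<Rightarrow> (item \<Rightarrow> real \<times> real) \<Rightarrow> (item \<Rightarrow> bool)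
    \<Rightarrow> item \<Rightarrow> (real \<times> real) set" where
  "placed k n a pos rot it =
     (if rot it then open_rect (pos it) (item_height k n a it) (item_width k n a it)
      else open_rect (pos it) (item_width k n a it) (item_height k n a it))"

definition feasible_packing :: "nat \<Rightarrow> nat \<Rightarrow> (nat \<Rightarrow> nat) \<Rightarrow> item set
    \<Rightarrow> (item \<Rightarrow> real \<times> real) \<Rightarrow> (item \<Rightarrow> bool) \<Rightarrow> bool" where
  "feasible_packing k n a S pos rot \<longleftrightarrow>
     S \<subseteq> items n \<and>
     (\<forall>it\<in>S. placed k n a pos rot it \<subseteq> {0..bigN k n a} \<times> {0..bigN k n a}) \<and>
     (\<forall>it\<in>S. \<forall>it'\<in>S. it \<noteq> it' \<longrightarrow> placed k n a pos rot it \<inter> placed k n a pos rot it' = {})"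

definition packable_2DK :: "nat \<Rightarrow> nat \<Rightarrow> (nat \<Rightarrow> nat) \<Rightarrow> item set \<Rightarrow> bool" where
  "packable_2DK k n a S \<longleftrightarrow> (\<exists>pos. feasible_packing k n a S pos (\<lambda>_. False))"

definition packable_2DKR :: "nat \<Rightarrow> nat \<Rightarrow> (nat \<Rightarrow> nat) \<Rightarrow> item set \<Rightarrow> bool" where
  "packable_2DKR k n a S \<longleftrightarrow> (\<exists>pos rot. feasible_packing k n a S pos rot)"

text \<open>|OPT|: maximum cardinality of a feasible packing (all profits are 1).\<close>
definition opt_2DK :: "nat \<Rightarrow> nat \<Rightarrow> (nat \<Rightarrow> nat) \<Rightarrow> nat" where
  "opt_2DK k n a = Max (card ` {S. packable_2DK k n a S})"

definition opt_2DKR :: "nat \<Rightarrow> nat \<Rightarrow> (nat \<Rightarrow> nat) \<Rightarrow> nat" where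
  "opt_2DKR k n a = Max (card ` {S. packable_2DKR k n a S})"

end

theory Submission
  imports Defs "HOL-Analysis.Analysis"
begin


lemma Basis_rr: "(Basis :: (real\<times>real) set) = {(1,0),(0,1)}"
  by (auto simp: Basis_prod_def)

lemma open_rect_box: "open_rect p w h = box p (fst p + w, snd p + h)"
  by (cases p) (auto simp: open_rect_def mem_box Basis_prod_def inner_prod_def)

lemma open_rect_measure:
  assumes "w \<ge> 0" "h \<ge> 0"
  shows "measure lborel (open_rect p w h) = w * h"
  unfolding open_rect_box using assms
  apply (subst measure_lborel_box)
  by (cases p) (auto simp: Basis_rr inner_prod_def)

lemma open_rect_sets: "open_rect p w h \<in> sets lborel"
  unfolding open_rect_box by simp

lemma sq_eq: "{0..(N::real)} \<times> {0..N} = cbox (0,0) (N,N)"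
    by (auto simp: cbox_Pair_eq)

lemma sq_fmeas: "{0..(N::real)} \<times> {0..N} \<in> fmeasurable lborel"
  unfolding sq_eq by simp

lemma sq_measure: "N \<ge> 0 \<Longrightarrow> measure lborel ({0..(N::real)} \<times> {0..N}) = N * N"
  unfolding sq_eq
  apply (subst measure_lborel_cbox)
  by (auto simp: Basis_rr inner_prod_def)



lemma poly_ineq:
  fixes K :: real assumes "K \<ge> 9"
  shows "(2*K+1)*(2*K^3-1)*(K^4-1) > 4*K^8"
proof -
  have e: "(2*K+1)*(2*K^3-1)*(K^4-1) - 4*K^8 = K^3 * (2*(K*K)*(K*K) - 2*(K*K) - 5*K - 2) + 2*K + 1"
    by algebra
  have k1: "K*K \<ge> 9 * K" using assms by (intro mult_right_mono) auto
  have kk: "9*9 \<le> K*K" using mult_mono[of 9 K 9 K] assms by simp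
  have k2: "(K*K)*(K*K) \<ge> 81 * (K * K)" using kk by (intro mult_right_mono) auto
  have "2*(K*K)*(K*K) - 2*(K*K) - 5*K - 2 > 0" using k1 k2 assms by linarith
  moreover have "K^3 > 0" using assms by simp
  ultimately have "K^3 * (2*(K*K)*(K*K) - 2*(K*K) - 5*K - 2) > 0" by simp
  with e assms show ?thesis by linarith
qed

lemma area_sum_le:
  assumes "finite S" "\<And>x. x \<in> S \<Longrightarrow> R x \<in> sets lborel" "\<And>x. x \<in> S \<Longrightarrow> R x \<subseteq> Q"
    "Q \<in> fmeasurable lborel"
    "\<And>x y. x \<in> S \<Longrightarrow> y \<in> S \<Longrightarrow> x \<noteq> y \<Longrightarrow> R x \<inter> R y = {}"
  shows "(\<Sum>x\<in>S. measure lborel (R x)) \<le> measure lborel Q"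
proof -
  have fm: "R x \<in> fmeasurable lborel" if "x \<in> S" for x
    using fmeasurableI2[OF assms(4) assms(3)[OF that] assms(2)[OF that]] .
  have "measure lborel (\<Union>x\<in>S. R x) = (\<Sum>x\<in>S. measure lborel (R x))"
    apply (rule measure_finite_Union)
    subgoal using assms(1) .
    subgoal using assms(2) by blast
    subgoal unfolding disjoint_family_on_def using assms(5) by blast
    subgoal for x using fmeasurableD2[OF fm[of x]] by simp
    done
  moreover have "measure lborel (\<Union>x\<in>S. R x) \<le> measure lborel Q"
    apply (rule measure_mono_fmeasurable)
    subgoal using assms(3) by blast
    subgoal by (rule sets.finite_UN[OF assms(1)]) (rule assms(2))
    subgoal using assms(4) .
    done
  ultimately show ?thesis by simp
qed



lemma items_finite: "finite (items n)"
proof -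
  have "items n = {..<n} \<times> UNIV" by (auto simp: items_def)
  then show ?thesis by simp
qed

lemma a_le_M: "i < n \<Longrightarrow> a i \<le> maxA n a"
  unfolding maxA_def by (rule Max_ge) auto

lemma item_dims:
  fixes a :: "nat \<Rightarrow> nat"
  assumes "it \<in> items n" "k \<ge> 9"
  defines "M \<equiv> real (maxA n a)" and "N \<equiv> bigN k n a"
  shows "item_width k n a it \<ge> 0 \<and> item_height k n a it \<ge> 0 \<and>
    item_width k n a it * item_height k n a it \<ge> (N / real k - M) * (N/2 - M)
    \<and> N / real k - M \<ge> 0 \<and> N/2 - M \<ge> 0"
proof -
  obtain i b where it: "it = (i, b)" and i: "i < n" using assms(1) by (cases it) (auto simp: items_def)
  have ai: "real (a i) \<le> M" using a_le_M[OF i] M_def by simp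
  have c: "N / real k = 2 * M * real k ^ 3"
    using assms(2) by (simp add: N_def bigN_def M_def power_def eval_nat_numeral)
  have M0: "M \<ge> 0" by (simp add: M_def)
  have k1: "real k ^ 3 \<ge> 1" using assms(2) by simp
  have "2 * M * real k ^ 3 \<ge> 2 * M" using mult_left_mono[OF k1, of "2*M"] M0 by simp
  hence cM: "N / real k - M \<ge> M" using c M0 by linarith
  have k4: "real k ^ 4 \<ge> 1" using assms(2) by simp
  have "2 * M * real k ^ 4 \<ge> 2 * M" using mult_left_mono[OF k4, of "2*M"] M0 by simp
  hence hM: "N/2 - M \<ge> 0" using M0 by (simp add: N_def bigN_def M_def)
  have a0: "real (a i) \<ge> 0" by simp
  show ?thesis
  proof (cases b)
    case True
    have "(N / real k - M) * (N/2 - M) \<le> (N / real k - a i) * (N/2 + a i)"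
      using cM hM ai a0 M0 by (intro mult_mono) auto
    then show ?thesis using True it cM hM ai a0 M0
      by (auto simp: item_width_def item_height_def N_def)
  next
    case False
    have "(N / real k - M) * (N/2 - M) \<le> (N / real k + a i) * (N/2 - a i)"
      using cM hM ai a0 M0 by (intro mult_mono) auto
    then show ?thesis using False it cM hM ai a0 M0
      by (auto simp: item_width_def item_height_def N_def)
  qed
qed

lemma upper_bound:
  assumes fp: "feasible_packing k n a S pos rot" and k: "k \<ge> 9" and pos: "\<forall>i<n. a i > 0" and n: "n > 0"
  shows "card S \<le> 2 * k"
proof (rule ccontr)
  assume "\<not> card S \<le> 2 * k"
  hence cS: "real (card S) \<ge> 2 * real k + 1" by linarith
  define M where "M = real (maxA n a)"
  define N where "N = bigN k n a"
  define A0 where "A0 = (N / real k - M) * (N/2 - M)"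
  have sub: "S \<subseteq> items n" using fp by (simp add: feasible_packing_def)
  have Sf: "finite S" using sub items_finite finite_subset by blast
  have N0: "N \<ge> 0" by (simp add: N_def bigN_def)
  have area: "measure lborel (placed k n a pos rot it) \<ge> A0" if "it \<in> S" for it
  proof -
    have "it \<in> items n" using that sub by blast
    from item_dims[OF this k] have d: "item_width k n a it \<ge> 0" "item_height k n a it \<ge> 0"
      "item_width k n a it * item_height k n a it \<ge> A0" unfolding A0_def M_def N_def by auto
    show ?thesis
    proof (cases "rot it")
      case True
      then show ?thesis using d by (simp add: placed_def open_rect_measure mult.commute)
    next
      case False
      then show ?thesis using d by (simp add: placed_def open_rect_measure)
    qed
  qed
  have A00: "A0 \<ge> 0" using item_dims[of "(0,False)" n k a] n k unfolding A0_def M_def N_def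
    by (auto simp: items_def)
  have "(\<Sum>it\<in>S. measure lborel (placed k n a pos rot it)) \<le> measure lborel ({0..N} \<times> {0..N})"
    apply (rule area_sum_le[OF Sf])
    subgoal by (simp add: placed_def open_rect_box)
    subgoal using fp unfolding feasible_packing_def N_def by blast
    subgoal by (rule sq_fmeas)
    subgoal using fp unfolding feasible_packing_def N_def by blast
    done
  also have "\<dots> = N * N" using sq_measure[OF N0] .
  finally have le: "(\<Sum>it\<in>S. measure lborel (placed k n a pos rot it)) \<le> N * N" .
  have "real (card S) * A0 \<le> (\<Sum>it\<in>S. measure lborel (placed k n a pos rot it))"
    using sum_mono[of S "\<lambda>_. A0", OF area] by simp
  moreover have "(2 * real k + 1) * A0 \<le> real (card S) * A0" using cS A00 by (intro mult_right_mono) auto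
  moreover have "(2 * real k + 1) * A0 > N * N"
  proof -
    have M0: "M > 0" using pos n a_le_M[of 0 n a] unfolding M_def by (metis of_nat_0_less_iff order_less_le_trans)
    have Nd: "N = 2 * M * real k ^ 4" by (simp add: N_def bigN_def M_def)
    have c: "N / real k = 2 * M * real k ^ 3"
      using k by (simp add: Nd power_def eval_nat_numeral)
    have A0eq: "A0 = M^2 * ((2 * real k ^3 - 1) * (real k ^4 - 1))"
    proof -
      have N2: "N / 2 = M * real k ^ 4" by (simp add: Nd)
      show ?thesis unfolding A0_def c N2 by (simp add: power2_eq_square algebra_simps)
    qed
    hence "(2 * real k + 1) * A0 = M^2 * ((2 * real k + 1) * (2 * real k ^3 - 1) * (real k ^4 - 1))"
      unfolding A0eq by algebra
    moreover have "N * N = M^2 * (4 * real k ^ 8)"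
    proof -
      have "real k ^ 8 = real k^4 * real k^4" by (simp flip: power_add)
      then show ?thesis unfolding Nd by (simp add: power2_eq_square)
    qed
    moreover have "(2 * real k + 1) * (2 * real k ^3 - 1) * (real k ^4 - 1) > 4 * real k ^ 8"
      using poly_ineq k by simp
    ultimately show ?thesis using M0 by simp
  qed
  ultimately show False using le by linarith
qed



definition lexo :: "(nat \<Rightarrow> real) \<Rightarrow> nat \<Rightarrow> nat \<Rightarrow> bool" where
  "lexo f i j \<longleftrightarrow> f i < f j \<or> (f i = f j \<and> i < j)"

definition pre :: "(nat \<Rightarrow> real) \<Rightarrow> nat set \<Rightarrow> (nat \<Rightarrow> real) \<Rightarrow> nat \<Rightarrow> real" where
  "pre f I g j = (\<Sum>i\<in>{i\<in>I. lexo f i j}. g i)"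

lemma lexo_trans: "lexo f i j \<Longrightarrow> lexo f j l \<Longrightarrow> lexo f i l"
  unfolding lexo_def by auto

lemma lexo_irrefl: "\<not> lexo f i i"
  unfolding lexo_def by auto

lemma lexo_total: "i \<noteq> j \<Longrightarrow> lexo f i j \<or> lexo f j i"
  unfolding lexo_def by auto

lemma lexo_le: "lexo f i j \<Longrightarrow> f i \<le> f j"
  unfolding lexo_def by auto

lemma lexo_not: "\<not> lexo f i j \<Longrightarrow> f j \<le> f i"
  unfolding lexo_def by auto

lemma pre_nonneg: "(\<And>i. i \<in> I \<Longrightarrow> 0 \<le> g i) \<Longrightarrow> 0 \<le> pre f I g j"
  unfolding pre_def by (rule sum_nonneg) auto

lemma pre_step:
  assumes "finite I" "j' \<in> I" "lexo f j' j" "\<And>i. i \<in> I \<Longrightarrow> 0 \<le> g i"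
  shows "pre f I g j' + g j' \<le> pre f I g j"
proof -
  have sub: "insert j' {i\<in>I. lexo f i j'} \<subseteq> {i\<in>I. lexo f i j}"
    using assms(2,3) lexo_trans by blast
  have nin: "j' \<notin> {i\<in>I. lexo f i j'}" using lexo_irrefl by blast
  have "pre f I g j' + g j' = (\<Sum>i\<in>insert j' {i\<in>I. lexo f i j'}. g i)"
    unfolding pre_def using assms(1) nin by simp
  also have "\<dots> \<le> (\<Sum>i\<in>{i\<in>I. lexo f i j}. g i)"
    apply (rule sum_mono2) using assms sub by auto
  finally show ?thesis unfolding pre_def .
qed

lemma pre_total:
  assumes "finite I" "j \<in> I" "\<And>i. i \<in> I \<Longrightarrow> 0 \<le> g i"
  shows "pre f I g j + g j \<le> sum g I"
proof -
  have nin: "j \<notin> {i\<in>I. lexo f i j}" using lexo_irrefl by blast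
  have "pre f I g j + g j = (\<Sum>i\<in>insert j {i\<in>I. lexo f i j}. g i)"
    unfolding pre_def using assms(1) nin by simp
  also have "\<dots> \<le> sum g I"
    apply (rule sum_mono2) using assms by auto
  finally show ?thesis .
qed

lemma pre_mono_fun:
  assumes "\<And>i. i \<in> I \<Longrightarrow> g i \<le> h i"
  shows "pre f I g j \<le> pre f I h j"
  unfolding pre_def by (rule sum_mono) (use assms in auto)

lemma pre_diff:
  "pre f I (\<lambda>i. c + x i) j - pre f I (\<lambda>i. c - x i) j = 2 * pre f I x j"
  unfolding pre_def by (simp add: sum.distrib sum_subtractf)

lemma pre_le_sum:
  assumes "finite I" "\<And>i. i \<in> I \<Longrightarrow> 0 \<le> g i"
  shows "pre f I g j \<le> sum g I"
  unfolding pre_def apply (rule sum_mono2) using assms by auto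

lemma rect_in:
  "0 \<le> fst p \<Longrightarrow> fst p + w \<le> N \<Longrightarrow> 0 \<le> snd p \<Longrightarrow> snd p + h \<le> N \<Longrightarrow>
   open_rect p w h \<subseteq> {0..N} \<times> {0..N}"
  unfolding open_rect_def by auto

lemma rect_disj:
  "fst p + w \<le> fst q \<or> fst q + w' \<le> fst p \<or> snd p + h \<le> snd q \<or> snd q + h' \<le> snd p \<Longrightarrow>
   open_rect p w h \<inter> open_rect q w' h' = {}"
  unfolding open_rect_def by auto



lemma construction:
  fixes A1 A2 :: "nat set" and ar :: "nat \<Rightarrow> real" and c H N :: real
  assumes fin1: "finite A1" and fin2: "finite A2" and dj: "A1 \<inter> A2 = {}"
    and bnd: "\<And>i. i \<in> A1 \<union> A2 \<Longrightarrow> 0 \<le> ar i \<and> ar i \<le> c \<and> ar i \<le> H"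
    and NH: "N = 2*H" and eqs: "sum ar A1 = sum ar A2"
    and tot: "(real (card A1) + real (card A2)) * c = N"
  defines "W \<equiv> \<lambda>it. if snd it then c - ar (fst it) else c + ar (fst it)"
    and "Hh \<equiv> \<lambda>it. if snd it then H + ar (fst it) else H - ar (fst it)"
    and "pos \<equiv> \<lambda>it. (if fst it \<in> A1 then (if snd it then (pre (\<lambda>i. - ar i) A1 (\<lambda>i. c - ar i) (fst it), 0)
          else (pre (\<lambda>i. - ar i) A1 (\<lambda>i. c + ar i) (fst it), H + ar (fst it)))
        else (if snd it then (sum (\<lambda>i. c + ar i) A1 + pre ar A2 (\<lambda>i. c - ar i) (fst it), H - ar (fst it))
          else (sum (\<lambda>i. c - ar i) A1 + pre ar A2 (\<lambda>i. c + ar i) (fst it), 0)))"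
  shows "(\<forall>it \<in> {(i,b). i \<in> A1 \<union> A2}. open_rect (pos it) (W it) (Hh it) \<subseteq> {0..N}\<times>{0..N})
    \<and> (\<forall>it \<in> {(i,b). i \<in> A1 \<union> A2}. \<forall>it' \<in> {(i,b). i \<in> A1 \<union> A2}. it \<noteq> it' \<longrightarrow>
         open_rect (pos it) (W it) (Hh it) \<inter> open_rect (pos it') (W it') (Hh it') = {})"
proof -
  define f1 where "f1 = (\<lambda>i. - ar i)"
  define gp where "gp = (\<lambda>i. c + ar i)"
  define gm where "gm = (\<lambda>i. c - ar i)"
  define S1p where "S1p = sum gp A1"
  define S1m where "S1m = sum gm A1"
  define S2p where "S2p = sum gp A2"
  define S2m where "S2m = sum gm A2"
  have gp0: "\<And>i. i \<in> A1 \<union> A2 \<Longrightarrow> 0 \<le> gp i" using bnd unfolding gp_def by force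
  have gm0: "\<And>i. i \<in> A1 \<union> A2 \<Longrightarrow> 0 \<le> gm i" using bnd unfolding gm_def by force
  have ar0: "\<And>i. i \<in> A1 \<union> A2 \<Longrightarrow> 0 \<le> ar i" using bnd by blast
  have gmp: "\<And>i. i \<in> A1 \<union> A2 \<Longrightarrow> gm i \<le> gp i" using bnd unfolding gm_def gp_def by force
  have s1p: "S1p = real (card A1) * c + sum ar A1" unfolding S1p_def gp_def by (simp add: sum.distrib)
  have s1m: "S1m = real (card A1) * c - sum ar A1" unfolding S1m_def gm_def by (simp add: sum_subtractf)
  have s2p: "S2p = real (card A2) * c + sum ar A2" unfolding S2p_def gp_def by (simp add: sum.distrib)
  have s2m: "S2m = real (card A2) * c - sum ar A2" unfolding S2m_def gm_def by (simp add: sum_subtractf)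
  have T1: "S1p + S2m = N" using s1p s2m eqs tot by (simp add: algebra_simps)
  have T2: "S1m + S2p = N" using s1m s2p eqs tot by (simp add: algebra_simps)
  have S2m0: "0 \<le> S2m" unfolding S2m_def by (rule sum_nonneg) (use gm0 in auto)
  have S2p0: "0 \<le> S2p" unfolding S2p_def by (rule sum_nonneg) (use gp0 in auto)
  have S1mp: "S1m \<le> S1p" unfolding S1m_def S1p_def by (rule sum_mono) (use gmp in auto)
  have sa0: "0 \<le> sum ar A2" by (rule sum_nonneg) (use ar0 in auto)
  have S1d: "S1p - S1m = 2 * sum ar A2" using s1p s1m eqs by simp
  have p1F: "pos (i, False) = (pre f1 A1 gp i, H + ar i)" "W (i, False) = gp i" "Hh (i, False) = H - ar i"
    if "i \<in> A1" for i using that unfolding pos_def W_def Hh_def f1_def gp_def by auto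
  have p1T: "pos (i, True) = (pre f1 A1 gm i, 0)" "W (i, True) = gm i" "Hh (i, True) = H + ar i"
    if "i \<in> A1" for i using that unfolding pos_def W_def Hh_def f1_def gm_def by auto
  have p2T: "pos (i, True) = (S1p + pre ar A2 gm i, H - ar i)" "W (i, True) = gm i" "Hh (i, True) = H + ar i"
    if "i \<in> A2" for i using that dj unfolding pos_def W_def Hh_def S1p_def gp_def gm_def by auto
  have p2F: "pos (i, False) = (S1m + pre ar A2 gp i, 0)" "W (i, False) = gp i" "Hh (i, False) = H - ar i"
    if "i \<in> A2" for i using that dj unfolding pos_def W_def Hh_def S1m_def gp_def gm_def by auto
  define SEP where "SEP = (\<lambda>it it'. fst (pos it) + W it \<le> fst (pos it') \<or> snd (pos it) + Hh it \<le> snd (pos it'))"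
  have gp1: "\<And>i. i \<in> A1 \<Longrightarrow> 0 \<le> gp i" "\<And>i. i \<in> A2 \<Longrightarrow> 0 \<le> gp i" using gp0 by auto
  have gm1: "\<And>i. i \<in> A1 \<Longrightarrow> 0 \<le> gm i" "\<And>i. i \<in> A2 \<Longrightarrow> 0 \<le> gm i" using gm0 by auto
  have ar1: "\<And>i. i \<in> A2 \<Longrightarrow> 0 \<le> ar i" using ar0 by auto
  have S1m0: "0 \<le> S1m" unfolding S1m_def by (rule sum_nonneg) (use gm0 in auto)
  have contain: "open_rect (pos it) (W it) (Hh it) \<subseteq> {0..N}\<times>{0..N}" if itT: "it \<in> {(i,b). i \<in> A1 \<union> A2}" for it
  proof -
    obtain i b where it: "it = (i, b)" and i: "i \<in> A1 \<union> A2" using itT by (cases it) auto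
    have bi: "0 \<le> ar i" "ar i \<le> H" using bnd[OF i] by auto
    show ?thesis
    proof (cases "i \<in> A1")
      case True
      note iA = True
      show ?thesis
      proof (cases b)
        case True
        hence bb: "b = True" by simp
        have "pre f1 A1 gm i + gm i \<le> S1m" unfolding S1m_def by (rule pre_total[OF fin1 iA gm1(1)])
        moreover have "0 \<le> pre f1 A1 gm i" by (rule pre_nonneg) (rule gm1(1))
        ultimately show ?thesis unfolding it bb p1T[OF iA] using S1mp T1 S2m0 bi NH
          by (intro rect_in) auto
      next
        case False
        hence bb: "b = False" by simp
        have "pre f1 A1 gp i + gp i \<le> S1p" unfolding S1p_def by (rule pre_total[OF fin1 iA gp1(1)])
        moreover have "0 \<le> pre f1 A1 gp i" by (rule pre_nonneg) (rule gp1(1))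
        ultimately show ?thesis unfolding it bb p1F[OF iA] using S1mp T1 S2m0 bi NH
          by (intro rect_in) auto
      qed
    next
      case False
      hence iA: "i \<in> A2" using i by auto
      show ?thesis
      proof (cases b)
        case True
        hence bb: "b = True" by simp
        have "pre ar A2 gm i + gm i \<le> S2m" unfolding S2m_def by (rule pre_total[OF fin2 iA gm1(2)])
        moreover have "0 \<le> pre ar A2 gm i" by (rule pre_nonneg) (rule gm1(2))
        ultimately show ?thesis unfolding it bb p2T[OF iA] using S1mp S1m0 T1 S2m0 bi NH
          by (intro rect_in) auto
      next
        case False
        hence bb: "b = False" by simp
        have "pre ar A2 gp i + gp i \<le> S2p" unfolding S2p_def by (rule pre_total[OF fin2 iA gp1(2)])
        moreover have "0 \<le> pre ar A2 gp i" by (rule pre_nonneg) (rule gp1(2))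
        ultimately show ?thesis unfolding it bb p2F[OF iA] using S1mp S1m0 T2 S2p0 bi NH
          by (intro rect_in) auto
      qed
    qed
  qed
  have hA: "SEP (i,False) (i',False) \<and> SEP (i,True) (i',True)" if "i \<in> A1" "i' \<in> A1" "lexo f1 i i'" for i i'
  proof -
    have "pre f1 A1 gp i + gp i \<le> pre f1 A1 gp i'" by (rule pre_step[OF fin1 that(1) that(3) gp1(1)])
    moreover have "pre f1 A1 gm i + gm i \<le> pre f1 A1 gm i'" by (rule pre_step[OF fin1 that(1) that(3) gm1(1)])
    ultimately show ?thesis unfolding SEP_def p1F[OF that(1)] p1F[OF that(2)] p1T[OF that(1)] p1T[OF that(2)]
      by simp
  qed
  have hB: "SEP (i,False) (i',False) \<and> SEP (i,True) (i',True)" if "i \<in> A2" "i' \<in> A2" "lexo ar i i'" for i i'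
  proof -
    have "pre ar A2 gp i + gp i \<le> pre ar A2 gp i'" by (rule pre_step[OF fin2 that(1) that(3) gp1(2)])
    moreover have "pre ar A2 gm i + gm i \<le> pre ar A2 gm i'" by (rule pre_step[OF fin2 that(1) that(3) gm1(2)])
    ultimately show ?thesis unfolding SEP_def p2F[OF that(1)] p2F[OF that(2)] p2T[OF that(1)] p2T[OF that(2)]
      by simp
  qed
  have hC: "SEP (i',True) (i,False)" if "i \<in> A1" "i' \<in> A1" for i i'
  proof (cases "lexo f1 i' i")
    case True
    have "pre f1 A1 gm i' + gm i' \<le> pre f1 A1 gm i" by (rule pre_step[OF fin1 that(2) True gm1(1)])
    moreover have "pre f1 A1 gm i \<le> pre f1 A1 gp i" by (rule pre_mono_fun) (use gmp in auto)
    ultimately show ?thesis unfolding SEP_def p1F[OF that(1)] p1T[OF that(2)] by simp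
  next
    case False
    then have "ar i' \<le> ar i" using lexo_not[OF False] unfolding f1_def by simp
    then show ?thesis unfolding SEP_def p1F[OF that(1)] p1T[OF that(2)] by simp
  qed
  have hD: "SEP (i',False) (i,True)" if "i \<in> A2" "i' \<in> A2" for i i'
  proof (cases "lexo ar i' i")
    case True
    have "pre ar A2 gp i' + gp i' \<le> pre ar A2 gp i" by (rule pre_step[OF fin2 that(2) True gp1(2)])
    moreover have "pre ar A2 gp i - pre ar A2 gm i = 2 * pre ar A2 ar i"
      unfolding gp_def gm_def by (rule pre_diff)
    moreover have "pre ar A2 ar i \<le> sum ar A2" by (rule pre_le_sum[OF fin2 ar1])
    ultimately show ?thesis unfolding SEP_def p2T[OF that(1)] p2F[OF that(2)] using S1d by simp
  next
    case False
    then have "ar i \<le> ar i'" using lexo_not[OF False] by simp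
    then show ?thesis unfolding SEP_def p2T[OF that(1)] p2F[OF that(2)] by simp
  qed
  have hE: "SEP (i,False) (i',True) \<and> SEP (i',False) (i,False) \<and> SEP (i,True) (i',True) \<and> SEP (i,True) (i',False)"
    if "i \<in> A1" "i' \<in> A2" for i i'
  proof -
    have "pre f1 A1 gp i + gp i \<le> S1p" unfolding S1p_def by (rule pre_total[OF fin1 that(1) gp1(1)])
    moreover have "pre f1 A1 gm i + gm i \<le> S1m" unfolding S1m_def by (rule pre_total[OF fin1 that(1) gm1(1)])
    moreover have "0 \<le> pre ar A2 gm i'" by (rule pre_nonneg) (rule gm1(2))
    moreover have "0 \<le> pre ar A2 gp i'" by (rule pre_nonneg) (rule gp1(2))
    moreover have "0 \<le> ar i" "0 \<le> ar i'" using ar0 that by auto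
    ultimately show ?thesis unfolding SEP_def p1F[OF that(1)] p1T[OF that(1)] p2F[OF that(2)] p2T[OF that(2)]
      using S1mp by auto
  qed
  have sepc: "SEP it it' \<or> SEP it' it" if itT: "it \<in> {(i,b). i \<in> A1 \<union> A2}" "it' \<in> {(i,b). i \<in> A1 \<union> A2}" "it \<noteq> it'" for it it'
  proof -
    obtain i b where it: "it = (i, b)" and i: "i \<in> A1 \<union> A2" using itT(1) by (cases it) auto
    obtain i' b' where it': "it' = (i', b')" and i': "i' \<in> A1 \<union> A2" using itT(2) by (cases it') auto
    consider "i \<in> A1" "i' \<in> A1" | "i \<in> A2" "i' \<in> A2" | "i \<in> A1" "i' \<in> A2" | "i \<in> A2" "i' \<in> A1"
      using i i' by blast
    then show ?thesis
    proof cases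
      case 1
      show ?thesis
      proof (cases "b = b'")
        case True
        then have "i \<noteq> i'" using itT(3) it it' by auto
        note AA = 1
        have bb: "b' = b" using True by simp
        consider "lexo f1 i i'" | "lexo f1 i' i" using lexo_total \<open>i \<noteq> i'\<close> by blast
        then show ?thesis
        proof cases
          case 1
          then show ?thesis using hA[OF AA 1] unfolding it it' bb by (cases b; simp)
        next
          case 2
          then show ?thesis using hA[OF AA(2,1) 2] unfolding it it' bb by (cases b; simp)
        qed
      next
        case False
        then show ?thesis using hC[OF 1] hC[OF 1(2,1)] unfolding it it' by (cases b; cases b'; simp)
      qed
    next
      case 2
      show ?thesis
      proof (cases "b = b'")
        case True
        then have "i \<noteq> i'" using itT(3) it it' by auto
        note AA = 2
        have bb: "b' = b" using True by simp
        consider "lexo ar i i'" | "lexo ar i' i" using lexo_total \<open>i \<noteq> i'\<close> by blast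
        then show ?thesis
        proof cases
          case 1
          then show ?thesis using hB[OF AA 1] unfolding it it' bb by (cases b; simp)
        next
          case 2
          then show ?thesis using hB[OF AA(2,1) 2] unfolding it it' bb by (cases b; simp)
        qed
      next
        case False
        then show ?thesis using hD[OF 2] hD[OF 2(2,1)] unfolding it it' by (cases b; cases b'; simp)
      qed
    next
      case 3
      then show ?thesis using hE[OF 3] unfolding it it' by (cases b; cases b'; simp)
    next
      case 4
      then show ?thesis using hE[OF 4(2,1)] unfolding it it' by (cases b; cases b'; simp)
    qed
  qed
  show ?thesis
  proof (intro conjI ballI impI)
    fix it :: "nat \<times> bool" assume "it \<in> {(i,b). i \<in> A1 \<union> A2}" then show "open_rect (pos it) (W it) (Hh it) \<subseteq> {0..N}\<times>{0..N}"
      by (rule contain)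
  next
    fix it it' :: "nat \<times> bool" assume a: "it \<in> {(i,b). i \<in> A1 \<union> A2}" "it' \<in> {(i,b). i \<in> A1 \<union> A2}" "it \<noteq> it'"
    show "open_rect (pos it) (W it) (Hh it) \<inter> open_rect (pos it') (W it') (Hh it') = {}"
      apply (rule rect_disj) using sepc[OF a] unfolding SEP_def by blast
  qed
qed



theorem mainTheorem9:
  fixes k n m :: nat and a :: "nat \<Rightarrow> nat" and idx :: "nat \<Rightarrow> nat"
  assumes "odd k" and "k \<ge> 9"
    and "\<forall>i<n. a i > 0"
    and "inj_on idx {1..k}" and "idx ` {1..k} \<subseteq> {..<n}"
    and "1 \<le> m" and "m \<le> k - 1"
    and "(\<Sum>j=1..m. a (idx j)) = (\<Sum>j=m+1..k. a (idx j))"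
  shows "packable_2DK k n a {(idx j, b) | j b. j \<in> {1..k}}
    \<and> (\<forall>S pos rot. feasible_packing k n a S pos rot \<longrightarrow> card S \<le> 2 * k)
    \<and> opt_2DK k n a = 2 * k \<and> opt_2DKR k n a = 2 * k"
proof -
  note k = assms(2)
  have "idx 1 \<in> idx ` {1..k}" using k by auto
  hence n: "n > 0" using assms(5) by auto
  have ub: "\<forall>S pos rot. feasible_packing k n a S pos rot \<longrightarrow> card S \<le> 2 * k"
  proof (intro allI impI)
    fix S pos rot assume "feasible_packing k n a S pos rot"
    then show "card S \<le> 2 * k" by (rule upper_bound[OF _ k assms(3) n])
  qed
  define T :: "(nat \<times> bool) set" where "T = {(idx j, b) | j b. j \<in> {1..k}}"
  define A1 where "A1 = idx ` {1..m}"
  define A2 where "A2 = idx ` {m+1..k}"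
  define N where "N = bigN k n a"
  define M where "M = real (maxA n a)"
  define c where "c = N / real k"
  define ar where "ar = (\<lambda>i. real (a i))"
  have inj1: "inj_on idx {1..m}" using assms(4) by (rule inj_on_subset) (use assms(7) in auto)
  have inj2: "inj_on idx {m+1..k}" using assms(4) by (rule inj_on_subset) auto
  have fin1: "finite A1" and fin2: "finite A2" unfolding A1_def A2_def by auto
  have dj: "A1 \<inter> A2 = {}"
  proof -
    have "idx ` {1..m} \<inter> idx ` {m+1..k} = idx ` ({1..m} \<inter> {m+1..k})"
      using assms(4) assms(7) by (intro inj_on_image_Int[symmetric]) auto
    then show ?thesis unfolding A1_def A2_def by auto
  qed
  have A12: "A1 \<union> A2 = idx ` {1..k}"
  proof -
    have "{1..m} \<union> {m+1..k} = {1..k}" using assms(6,7) by auto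
    then show ?thesis unfolding A1_def A2_def by (metis image_Un)
  qed
  have TT: "T = {(i,b). i \<in> A1 \<union> A2}" unfolding T_def A12 by auto
  have dims: "N / real k - M \<ge> 0 \<and> N/2 - M \<ge> 0"
  proof -
    have "idx 1 \<in> idx ` {1..k}" using k by auto
    hence "(idx 1, False) \<in> items n" using assms(5) by (auto simp: items_def)
    from item_dims[OF this k] show ?thesis unfolding N_def M_def by blast
  qed
  have bnd: "0 \<le> ar i \<and> ar i \<le> c \<and> ar i \<le> N/2" if "i \<in> A1 \<union> A2" for i
  proof -
    have "i < n" using that A12 assms(5) by auto
    then have "ar i \<le> M" unfolding ar_def M_def using a_le_M by simp
    then show ?thesis using dims unfolding c_def ar_def by auto
  qed
  have eqs: "sum ar A1 = sum ar A2"
  proof -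
    have "sum ar A1 = (\<Sum>j=1..m. ar (idx j))" unfolding A1_def by (subst sum.reindex[OF inj1]) simp
    also have "\<dots> = real (\<Sum>j=1..m. a (idx j))" unfolding ar_def by simp
    also have "\<dots> = real (\<Sum>j=m+1..k. a (idx j))" using assms(8) by simp
    also have "\<dots> = (\<Sum>j=m+1..k. ar (idx j))" unfolding ar_def by simp
    also have "\<dots> = sum ar A2" unfolding A2_def by (subst sum.reindex[OF inj2]) simp
    finally show ?thesis .
  qed
  have tot: "(real (card A1) + real (card A2)) * c = N"
  proof -
    have "card A1 = m" unfolding A1_def using card_image[OF inj1] by simp
    moreover have "card A2 = k - m" unfolding A2_def using card_image[OF inj2] by simp
    ultimately have "real (card A1) + real (card A2) = real k" using assms(7) by simp
    then show ?thesis unfolding c_def using k by simp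
  qed
  define pos where "pos \<equiv> \<lambda>it. (if fst it \<in> A1 then (if snd it then (pre (\<lambda>i. - ar i) A1 (\<lambda>i. c - ar i) (fst it), 0)
          else (pre (\<lambda>i. - ar i) A1 (\<lambda>i. c + ar i) (fst it), N/2 + ar (fst it)))
        else (if snd it then (sum (\<lambda>i. c + ar i) A1 + pre ar A2 (\<lambda>i. c - ar i) (fst it), N/2 - ar (fst it))
          else (sum (\<lambda>i. c - ar i) A1 + pre ar A2 (\<lambda>i. c + ar i) (fst it), 0)))"
  have W: "item_width k n a = (\<lambda>it. if snd it then c - ar (fst it) else c + ar (fst it))"
    by (rule ext) (auto simp: item_width_def c_def ar_def N_def split: prod.splits)
  have Hh: "item_height k n a = (\<lambda>it. if snd it then N/2 + ar (fst it) else N/2 - ar (fst it))"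
    by (rule ext) (auto simp: item_height_def ar_def N_def split: prod.splits)
  have C: "(\<forall>it \<in> {(i,b). i \<in> A1 \<union> A2}. open_rect (pos it) (item_width k n a it) (item_height k n a it) \<subseteq> {0..N}\<times>{0..N})
    \<and> (\<forall>it \<in> {(i,b). i \<in> A1 \<union> A2}. \<forall>it' \<in> {(i,b). i \<in> A1 \<union> A2}. it \<noteq> it' \<longrightarrow>
         open_rect (pos it) (item_width k n a it) (item_height k n a it) \<inter> open_rect (pos it') (item_width k n a it') (item_height k n a it') = {})"
    unfolding W Hh pos_def
    by (rule construction[OF fin1 fin2 dj bnd _ eqs tot]) auto
  have Tsub: "T \<subseteq> items n" using assms(5) by (auto simp: T_def items_def image_subset_iff)
  have fpT: "feasible_packing k n a T pos (\<lambda>_. False)"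
    unfolding feasible_packing_def placed_def using Tsub C unfolding TT N_def by simp
  hence p1: "packable_2DK k n a T" unfolding packable_2DK_def by blast
  have cardT: "card T = 2 * k"
  proof -
    have cA1: "card A1 = m" unfolding A1_def using card_image[OF inj1] by simp
    have cA2: "card A2 = k - m" unfolding A2_def using card_image[OF inj2] by simp
    have "card (A1 \<union> A2) = k" using card_Un_disjoint[OF fin1 fin2 dj] cA1 cA2 assms(7) by simp
    moreover have "T = (A1 \<union> A2) \<times> (UNIV :: bool set)" unfolding TT by auto
    ultimately show ?thesis by (simp add: card_cartesian_product)
  qed
  have opt1: "opt_2DK k n a = 2 * k"
  proof -
    have le: "\<forall>x \<in> card ` {S. packable_2DK k n a S}. x \<le> 2 * k"
    proof
      fix x assume "x \<in> card ` {S. packable_2DK k n a S}"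
      then obtain S where xS: "x = card S" and pS: "packable_2DK k n a S" by blast
      from pS obtain pos where "feasible_packing k n a S pos (\<lambda>_. False)" unfolding packable_2DK_def by blast
      then have "card S \<le> 2 * k" by (rule ub[rule_format])
      with xS show "x \<le> 2 * k" by simp
    qed
    have fin: "finite (card ` {S. packable_2DK k n a S})"
      by (rule finite_subset[of _ "{..2*k}"]) (use le in auto)
    have mem: "2 * k \<in> card ` {S. packable_2DK k n a S}" using p1 cardT by force
    show ?thesis unfolding opt_2DK_def by (rule Max_eqI[OF fin]) (use le mem in auto)
  qed
  have opt2: "opt_2DKR k n a = 2 * k"
  proof -
    have le: "\<forall>x \<in> card ` {S. packable_2DKR k n a S}. x \<le> 2 * k"
    proof
      fix x assume "x \<in> card ` {S. packable_2DKR k n a S}"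
      then obtain S where xS: "x = card S" and pS: "packable_2DKR k n a S" by blast
      from pS obtain pos rot where "feasible_packing k n a S pos rot" unfolding packable_2DKR_def by blast
      then have "card S \<le> 2 * k" by (rule ub[rule_format])
      with xS show "x \<le> 2 * k" by simp
    qed
    have fin: "finite (card ` {S. packable_2DKR k n a S})"
      by (rule finite_subset[of _ "{..2*k}"]) (use le in auto)
    have "packable_2DKR k n a T" using fpT unfolding packable_2DKR_def by blast
    hence mem: "2 * k \<in> card ` {S. packable_2DKR k n a S}" using cardT by force
    show ?thesis unfolding opt_2DKR_def by (rule Max_eqI[OF fin]) (use le mem in auto)
  qed
  have p1': "packable_2DK k n a {(idx j, b) | j b. j \<in> {1..k}}" using p1 unfolding T_def .
  show ?thesis by (intro conjI p1' ub opt1 opt2)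
qed

end
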